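(* Let $\Pi=\{321,312,123,231\}$ (consecutive patterns). For $k\ge 1$, $$I_{2k+1}(\Pi;q)=2\,q^k C_k(q),\qquad I_{2k}(\Pi;q)=q^{k-1}C_{k-1}(q)+q^kC_k(q).$$
   Context: For $\sigma\in S_3$ and $\pi=\pi_1\cdots\pi_n\in S_n$, $\pi$ contains the consecutive pattern $\sigma$ if there is an index $i$ with $1\le i\le n-2$ such that $\pi_i\pi_{i+1}\pi_{i+2}$ is order-isomorphic to $\sigma$; otherwise $\pi$ avoids $\sigma$. $\mathrm{Av}_n(\Pi)$ is the set of $\pi\in S_n$ avoiding every pattern in $\Pi$. $\mathrm{inv}(\pi)=\#\{(i,j):i<j,\ \pi_i>\pi_j\}$ and $I_n(\Pi;q)=\sum_{\pi\in\mathrm{Av}_n(\Pi)}q^{\mathrm{inv}(\pi)}$. A Dyck path of length $k$ is a lattice path from $(0,0)$ to $(k,k)$ with unit steps $(1,0)$ and $(0,1)$ containing no point $(x,y)$ with $x>y$; its area is the number of unit squares lying below the path and completely above the diagonal. $C_k(q)=\sum_P q^{\mathrm{area}(P)}$ over Dyck paths $P$ of length $k$ (so $C_0(q)=1$). *)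

theory Defs
  imports Main
begin

definition perms :: "nat \<Rightarrow> nat list set" where
  "perms n = {p. distinct p \<and> set p = {1..n}}"

definition order_iso :: "nat list \<Rightarrow> nat list \<Rightarrow> bool" where
  "order_iso xs ys \<longleftrightarrow> length xs = length ys \<and>
     (\<forall>i<length xs. \<forall>j<length xs. (xs ! i < xs ! j) = (ys ! i < ys ! j))"

definition contains_cons :: "nat list \<Rightarrow> nat list \<Rightarrow> bool" where
  "contains_cons p \<sigma> \<longleftrightarrow>
     (\<exists>i. i + 2 < length p \<and> order_iso [p ! i, p ! (i+1), p ! (i+2)] \<sigma>)"

definition Av :: "nat \<Rightarrow> nat list set \<Rightarrow> nat list set" where
  "Av n Pi = {p \<in> perms n. \<forall>\<sigma>\<in>Pi. \<not> contains_cons p \<sigma>}"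

definition inv :: "nat list \<Rightarrow> nat" where
  "inv p = card {(i, j). i < j \<and> j < length p \<and> p ! i > p ! j}"

definition I_poly :: "nat \<Rightarrow> nat list set \<Rightarrow> 'a::comm_ring_1 \<Rightarrow> 'a" where
  "I_poly n Pi q = (\<Sum>p\<in>Av n Pi. q ^ inv p)"

text \<open>Lattice paths: False = east step (1,0), True = north step (0,1).
  The endpoint of a path is (number of east steps, number of north steps).\<close>
definition endpt :: "bool list \<Rightarrow> nat \<times> nat" where
  "endpt P = (count_list P False, count_list P True)"

definition dyck :: "nat \<Rightarrow> bool list \<Rightarrow> bool" where
  "dyck k P \<longleftrightarrow> length P = 2 * k \<and> endpt P = (k, k) \<and>
     (\<forall>m\<le>length P. fst (endpt (take m P)) \<le> snd (endpt (take m P)))"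

text \<open>Unit square with lower-left corner (i,j). It lies below the path iff the
  east step of the path over column i is at height > j; it lies completely above
  the diagonal iff j \<ge> i + 1.\<close>
definition area :: "bool list \<Rightarrow> nat" where
  "area P = card {(i, j). j \<ge> i + 1 \<and>
      (\<exists>m<length P. P ! m = False \<and> fst (endpt (take m P)) = i
                    \<and> j < snd (endpt (take m P)))}"

definition Cq :: "nat \<Rightarrow> 'a::comm_ring_1 \<Rightarrow> 'a" where
  "Cq k q = (\<Sum>P\<in>{P. dyck k P}. q ^ area P)"

end

theory Submission
  imports Defs
begin


definition cnt :: "bool list \<Rightarrow> nat \<Rightarrow> bool \<Rightarrow> nat" where
  "cnt w t c = count_list (take t w) c"

lemma cnt_Suc: "cnt w (Suc t) c = cnt w t c + (if t < length w \<and> w!t = c then 1 else 0)"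
  unfolding cnt_def
  by (cases "t < length w") (auto simp: take_Suc_conv_app_nth)

lemma cnt_0[simp]: "cnt w 0 c = 0" by (simp add: cnt_def)

lemma cnt_mono: "m \<le> m' \<Longrightarrow> cnt w m c \<le> cnt w m' c"
  by (induction m') (auto simp: cnt_Suc le_Suc_eq)

lemma cnt_strict: "s < t \<Longrightarrow> s < length w \<Longrightarrow> w!s = c \<Longrightarrow> cnt w s c < cnt w t c"
  using cnt_mono[of "Suc s" t w c] by (simp add: cnt_Suc)

lemma cnt_le_total: "cnt w t c \<le> count_list w c"
proof -
  have "count_list w c = count_list (take t w) c + count_list (drop t w) c"
    by (metis append_take_drop_id count_list_append)
  thus ?thesis by (simp add: cnt_def)
qed

lemma cnt_full[simp]: "cnt w (length w) c = count_list w c" by (simp add: cnt_def)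

lemma count_tf: "count_list w True + count_list w False = length w"
  by (induction w) auto

lemma cnt_sum: "cnt w t True + cnt w t False = min t (length w)"
  by (induction t) (auto simp: cnt_Suc)

lemma cnt_lt_total: "t < length w \<Longrightarrow> w!t = c \<Longrightarrow> cnt w t c < count_list w c"
  using cnt_strict[of t "length w" w c] by simp

lemma cnt_card: "cnt w t c = card {s. s < t \<and> s < length w \<and> w!s = c}"
proof (induction t)
  case 0 thus ?case by simp
next
  case (Suc t)
  have "{s. s < Suc t \<and> s < length w \<and> w!s = c} = {s. s < t \<and> s < length w \<and> w!s = c} \<union> (if t < length w \<and> w!t = c then {t} else {})"
    by (cases "t < length w \<and> w!t = c") (auto simp: less_Suc_eq)
  thus ?case using Suc by (simp add: cnt_Suc)
qed

definition posw :: "bool list \<Rightarrow> nat \<Rightarrow> nat" where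
  "posw w t = (if w!t then 2 * cnt w t True + 1 else 2 * cnt w t False)"

definition bal :: "bool list \<Rightarrow> bool" where
  "bal w \<longleftrightarrow> count_list w True \<le> count_list w False \<and> count_list w False \<le> count_list w True + 1"

lemma posw_lt: "bal w \<Longrightarrow> t < length w \<Longrightarrow> posw w t < length w"
proof -
  assume b: "bal w" and t: "t < length w"
  have s: "count_list w True + count_list w False = length w" by (rule count_tf)
  show ?thesis
  proof (cases "w!t")
    case True
    with cnt_lt_total[of t w True] t b s show ?thesis by (auto simp: posw_def bal_def)
  next
    case False
    with cnt_lt_total[of t w False] t b s show ?thesis by (auto simp: posw_def bal_def)
  qed
qed

lemma posw_inj: "inj_on (posw w) {..<length w}"
proof (rule inj_onI)
  fix s t assume s: "s \<in> {..<length w}" and t: "t \<in> {..<length w}" and e: "posw w s = posw w t"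
  show "s = t"
  proof (rule ccontr)
    assume ne: "s \<noteq> t"
    have "w!s = w!t"
    proof (rule ccontr)
      assume "w!s \<noteq> w!t"
      with e show False by (cases "w!s") (auto simp: posw_def split: if_splits, presburger+)
    qed
    moreover have "cnt w s (w!s) \<noteq> cnt w t (w!t)"
      using ne s t cnt_strict[of s t w "w!s"] cnt_strict[of t s w "w!t"] \<open>w!s = w!t\<close>
      by (cases "s < t") auto
    ultimately show False using e by (cases "w!s") (auto simp: posw_def)
  qed
qed

lemma posw_bij: "bal w \<Longrightarrow> bij_betw (posw w) {..<length w} {..<length w}"
  by (rule bij_betw_imageI[OF posw_inj]) (rule endo_inj_surj, auto intro: posw_lt posw_inj)



definition mkperm :: "nat \<Rightarrow> (nat \<Rightarrow> nat) \<Rightarrow> nat list" where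
  "mkperm n f = map (\<lambda>i. Suc (inv_into {..<n} f i)) [0..<n]"

lemma mkperm_len[simp]: "length (mkperm n f) = n" by (simp add: mkperm_def)

lemma mkperm_nth: "i < n \<Longrightarrow> mkperm n f ! i = Suc (inv_into {..<n} f i)"
  by (simp add: mkperm_def)

context
  fixes n :: nat and f :: "nat \<Rightarrow> nat" assumes bij: "bij_betw f {..<n} {..<n}"
begin

lemma mkperm_f: "t < n \<Longrightarrow> mkperm n f ! f t = Suc t"
proof -
  assume t: "t < n"
  have "f t < n" using bij t by (auto dest: bij_betwE)
  moreover have "inv_into {..<n} f (f t) = t"
    using bij t by (auto simp: bij_betw_def inv_into_f_f)
  ultimately show ?thesis by (simp add: mkperm_nth)
qed

lemma mkperm_inv_lt: "i < n \<Longrightarrow> inv_into {..<n} f i < n"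
  using bij by (metis bij_betw_def inv_into_into lessThan_iff)

lemma mkperm_f_inv: "i < n \<Longrightarrow> f (inv_into {..<n} f i) = i"
  using bij by (metis bij_betw_def f_inv_into_f lessThan_iff)

lemma mkperm_perms: "mkperm n f \<in> perms n"
proof -
  have d: "distinct (mkperm n f)"
  proof (rule distinct_conv_nth[THEN iffD2], intro allI impI)
    fix i j assume "i < length (mkperm n f)" "j < length (mkperm n f)" "i \<noteq> j"
    thus "mkperm n f ! i \<noteq> mkperm n f ! j"
      using mkperm_f_inv[of i] mkperm_f_inv[of j] by (simp add: mkperm_nth) metis
  qed
  have "set (mkperm n f) = {1..n}"
  proof
    show "set (mkperm n f) \<subseteq> {1..n}"
      using mkperm_inv_lt by (force simp: in_set_conv_nth mkperm_nth)
  next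
    show "{1..n} \<subseteq> set (mkperm n f)"
    proof
      fix v assume v: "v \<in> {1..n}"
      then obtain t where t: "v = Suc t" "t < n" by (cases v) auto
      have "f t < n" using bij t by (auto dest: bij_betwE)
      thus "v \<in> set (mkperm n f)" using mkperm_f[OF t(2)] t
        by (metis in_set_conv_nth mkperm_len)
    qed
  qed
  with d show ?thesis by (simp add: perms_def)
qed

lemma mkperm_inv: "Defs.inv (mkperm n f) = card {(s,t). s < t \<and> t < n \<and> f t < f s}"
proof -
  let ?p = "mkperm n f"
  let ?T = "{(s,t). s < t \<and> t < n \<and> f t < f s}"
  let ?I = "{(i, j). i < j \<and> j < length ?p \<and> ?p ! i > ?p ! j}"
  have inj: "inj_on f {..<n}" using bij by (simp add: bij_betw_def)
  have img: "(\<lambda>(s,t). (f t, f s)) ` ?T = ?I"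
  proof
    show "(\<lambda>(s,t). (f t, f s)) ` ?T \<subseteq> ?I"
    proof
      fix x assume "x \<in> (\<lambda>(s,t). (f t, f s)) ` ?T"
      then obtain s t where x: "x = (f t, f s)" "s < t" "t < n" "f t < f s" by auto
      have "f s < n" using bij x by (auto dest: bij_betwE)
      thus "x \<in> ?I" using x mkperm_f[of s] mkperm_f[of t] by auto
    qed
  next
    show "?I \<subseteq> (\<lambda>(s,t). (f t, f s)) ` ?T"
    proof
      fix x assume "x \<in> ?I"
      then obtain i j where x: "x = (i,j)" "i < j" "j < n" "?p ! i > ?p ! j" by auto
      define s where "s = inv_into {..<n} f j"
      define t where "t = inv_into {..<n} f i"
      have st: "s < n" "t < n" "f s = j" "f t = i"
        using x mkperm_inv_lt mkperm_f_inv s_def t_def by auto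
      have "s < t" using x(4) x(2,3) by (simp add: mkperm_nth s_def t_def)
      thus "x \<in> (\<lambda>(s,t). (f t, f s)) ` ?T" using st x
        by (auto intro!: image_eqI[where x="(s,t)"])
    qed
  qed
  have inj2: "inj_on (\<lambda>(s,t). (f t, f s)) ?T"
    using inj by (auto simp: inj_on_def)
  have "card ?I = card ?T" using card_image[OF inj2] img by simp
  thus ?thesis unfolding Defs.inv_def by simp
qed

end



abbreviation PI :: "nat list set" where "PI \<equiv> {[3,2,1],[3,1,2],[1,2,3],[2,3,1]}"

lemma oiso3: "order_iso [x,y,z] [a,b,c] \<longleftrightarrow>
  (x<y \<longleftrightarrow> a<b) \<and> (x<z\<longleftrightarrow>a<c) \<and> (y<x\<longleftrightarrow>b<a) \<and> (y<z \<longleftrightarrow> b<c) \<and> (z<x\<longleftrightarrow>c<a) \<and> (z<y\<longleftrightarrow>c<b)"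
  unfolding order_iso_def by (auto simp: less_Suc_eq numeral_3_eq_3)

lemma pat_ok: "x \<noteq> y \<Longrightarrow> y \<noteq> z \<Longrightarrow> x \<noteq> (z::nat) \<Longrightarrow>
  (\<forall>\<sigma>\<in>PI. \<not> order_iso [x,y,z] \<sigma>) \<longleftrightarrow> (x<z \<and> z<y) \<or> (y<x \<and> x<z)"
  by (simp add: oiso3) arith

lemma perms_len: "p \<in> perms n \<Longrightarrow> length p = n"
  proof -
  assume "p \<in> perms n"
  hence "distinct p" "set p = {1..n}" by (auto simp: perms_def)
  thus ?thesis using distinct_card[of p] by simp
qed

definition ok3 :: "nat \<Rightarrow> nat \<Rightarrow> nat \<Rightarrow> bool" where
  "ok3 x y z \<longleftrightarrow> (x<z \<and> z<y) \<or> (y<x \<and> x<z)"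

lemma Av_iff: "p \<in> Av n PI \<longleftrightarrow> p \<in> perms n \<and> (\<forall>i. i+2 < n \<longrightarrow> ok3 (p!i) (p!(i+1)) (p!(i+2)))"
proof (cases "p \<in> perms n")
  case True
  hence len: "length p = n" and d: "distinct p" by (auto simp: perms_len perms_def)
  have "(\<forall>\<sigma>\<in>PI. \<not> contains_cons p \<sigma>) \<longleftrightarrow> (\<forall>i. i+2 < n \<longrightarrow> ok3 (p!i) (p!(i+1)) (p!(i+2)))"
  proof -
    have "(\<forall>\<sigma>\<in>PI. \<not> contains_cons p \<sigma>) \<longleftrightarrow> (\<forall>i. i+2 < n \<longrightarrow> (\<forall>\<sigma>\<in>PI. \<not> order_iso [p!i, p!(i+1), p!(i+2)] \<sigma>))"
      unfolding contains_cons_def len by blast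
    also have "\<dots> \<longleftrightarrow> (\<forall>i. i+2 < n \<longrightarrow> ok3 (p!i) (p!(i+1)) (p!(i+2)))"
    proof -
      have "\<And>i. i+2 < n \<Longrightarrow> (\<forall>\<sigma>\<in>PI. \<not> order_iso [p!i, p!(i+1), p!(i+2)] \<sigma>) \<longleftrightarrow> ok3 (p!i) (p!(i+1)) (p!(i+2))"
      proof -
        fix i assume i: "i+2 < n"
        have "p!i \<noteq> p!(i+1)" "p!(i+1) \<noteq> p!(i+2)" "p!i \<noteq> p!(i+2)"
          using d i len by (auto simp: nth_eq_iff_index_eq)
        thus "?thesis i" unfolding ok3_def by (rule pat_ok)
      qed
      thus ?thesis by blast
    qed
    finally show ?thesis .
  qed
  thus ?thesis using True by (simp add: Av_def)
qed (simp add: Av_def)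

definition okl :: "bool list \<Rightarrow> nat \<Rightarrow> bool" where
  "okl w t \<longleftrightarrow> (if w!t then cnt w t False \<noteq> cnt w t True + 1 else cnt w t False \<noteq> cnt w t True)"

definition WC :: "bool list \<Rightarrow> bool" where
  "WC w \<longleftrightarrow> (\<forall>t<length w. 0 < posw w t \<longrightarrow> posw w t + 1 < length w \<longrightarrow> okl w t)"

lemma LA: "s < length w \<Longrightarrow> t < length w \<Longrightarrow> w!s = c \<Longrightarrow> (s < t \<longleftrightarrow> cnt w s c < cnt w t c)"
  by (metis cnt_mono cnt_strict leD linorder_not_less)

lemma posw_even: "posw w s = 2*r \<Longrightarrow> \<not> w!s \<and> cnt w s False = r"
  unfolding posw_def by (cases "w!s") presburger+

lemma posw_odd: "posw w s = 2*r+1 \<Longrightarrow> w!s \<and> cnt w s True = r"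
  unfolding posw_def by (cases "w!s") presburger+

definition Psi :: "bool list \<Rightarrow> nat list" where
  "Psi w = mkperm (length w) (posw w)"

lemma ok_iff_okl:
  assumes b: "bal w" and i: "i + 2 < length w"
  shows "ok3 (Psi w ! i) (Psi w ! (i+1)) (Psi w ! (i+2)) \<longleftrightarrow> okl w (inv_into {..<length w} (posw w) (i+1))"
proof -
  let ?n = "length w"
  have bij: "bij_betw (posw w) {..<?n} {..<?n}" using b by (rule posw_bij)
  define s where "s = inv_into {..<?n} (posw w) i"
  define t where "t = inv_into {..<?n} (posw w) (i+1)"
  define u where "u = inv_into {..<?n} (posw w) (i+2)"
  have lt: "s < ?n" "t < ?n" "u < ?n" using mkperm_inv_lt[OF bij] i s_def t_def u_def by auto
  have ps: "posw w s = i" "posw w t = i+1" "posw w u = i+2"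
    using mkperm_f_inv[OF bij] i s_def t_def u_def by auto
  have ne: "s \<noteq> t" "t \<noteq> u" "s \<noteq> u" using ps by auto
  have pv: "Psi w ! i = Suc s" "Psi w ! (i+1) = Suc t" "Psi w ! (i+2) = Suc u"
    using i by (auto simp: Psi_def mkperm_nth s_def t_def u_def)
  have "ok3 (Suc s) (Suc t) (Suc u) \<longleftrightarrow> okl w t"
  proof (cases "even i")
    case True
    then obtain r where r: "i = 2*r" by (auto elim: evenE)
    have A: "\<not> w!s" "cnt w s False = r" using posw_even[of w s r] ps r by auto
    have B: "w!t" "cnt w t True = r" using posw_odd[of w t r] ps r by auto
    have C: "\<not> w!u" "cnt w u False = r+1" using posw_even[of w u "r+1"] ps r by auto
    have su: "s < u" using LA[of s w u False] lt A C by simp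
    have st: "s < t \<longleftrightarrow> r < cnt w t False" using LA[of s w t False] lt A by simp
    have ut: "u < t \<longleftrightarrow> r+1 < cnt w t False" using LA[of u w t False] lt C by simp
    show ?thesis using su st ut ne B unfolding ok3_def okl_def by auto
  next
    case False
    then obtain r where r: "i = 2*r+1" using oddE by blast
    have A: "w!s" "cnt w s True = r" using posw_odd[of w s r] ps r by auto
    have B: "\<not> w!t" "cnt w t False = r+1" using posw_even[of w t "r+1"] ps r by auto
    have C: "w!u" "cnt w u True = r+1" using posw_odd[of w u "r+1"] ps r by auto
    have su: "s < u" using LA[of s w u True] lt A C by simp
    have st: "s < t \<longleftrightarrow> r < cnt w t True" using LA[of s w t True] lt A by simp
    have ut: "u < t \<longleftrightarrow> r+1 < cnt w t True" using LA[of u w t True] lt C by simp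
    show ?thesis using su st ut ne B unfolding ok3_def okl_def by auto
  qed
  thus ?thesis using pv t_def by simp
qed

lemma Psi_Av_iff:
  assumes b: "bal w"
  shows "Psi w \<in> Av (length w) PI \<longleftrightarrow> WC w"
proof -
  let ?n = "length w"
  have bij: "bij_betw (posw w) {..<?n} {..<?n}" using b by (rule posw_bij)
  have pe: "Psi w \<in> perms ?n" unfolding Psi_def using bij by (rule mkperm_perms)
  have "(\<forall>i. i+2 < ?n \<longrightarrow> ok3 (Psi w!i) (Psi w!(i+1)) (Psi w!(i+2))) \<longleftrightarrow> WC w"
  proof
    assume H: "\<forall>i. i+2 < ?n \<longrightarrow> ok3 (Psi w!i) (Psi w!(i+1)) (Psi w!(i+2))"
    show "WC w" unfolding WC_def
    proof (intro allI impI)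
      fix t assume t: "t < ?n" and p0: "0 < posw w t" and p1: "posw w t + 1 < ?n"
      obtain i where i: "posw w t = i + 1" using p0 by (cases "posw w t") auto
      have "inv_into {..<?n} (posw w) (i+1) = t"
        using bij t i by (metis bij_betw_def inv_into_f_f lessThan_iff)
      thus "okl w t" using H ok_iff_okl[OF b, of i] i p1 by auto
    qed
  next
    assume W: "WC w"
    show "\<forall>i. i+2 < ?n \<longrightarrow> ok3 (Psi w!i) (Psi w!(i+1)) (Psi w!(i+2))"
    proof (intro allI impI)
      fix i assume i: "i+2 < ?n"
      define t where "t = inv_into {..<?n} (posw w) (i+1)"
      have "t < ?n" "posw w t = i+1" using mkperm_inv_lt[OF bij] mkperm_f_inv[OF bij] i t_def by auto
      hence "okl w t" using W i unfolding WC_def by auto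
      thus "ok3 (Psi w!i) (Psi w!(i+1)) (Psi w!(i+2))" using ok_iff_okl[OF b i] t_def by simp
    qed
  qed
  thus ?thesis using pe Av_iff by blast
qed



lemma Psi_inj:
  assumes "bal w" "bal w'" "length w = length w'" "Psi w = Psi w'"
  shows "w = w'"
proof (rule nth_equalityI)
  show "length w = length w'" by fact
  fix t assume t: "t < length w"
  let ?n = "length w"
  have b1: "bij_betw (posw w) {..<?n} {..<?n}" using assms(1) by (rule posw_bij)
  have b2: "bij_betw (posw w') {..<?n} {..<?n}" using assms(2,3) posw_bij by metis
  have e1: "Psi w ! posw w t = Suc t" using mkperm_f[OF b1 t] by (simp add: Psi_def)
  have e2: "Psi w' ! posw w' t = Suc t" using mkperm_f[OF b2 t] assms(3) by (simp add: Psi_def)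
  have d: "distinct (Psi w)" using mkperm_perms[OF b1] by (simp add: Psi_def perms_def)
  have l1: "posw w t < ?n" using posw_lt[OF assms(1) t] .
  have l2: "posw w' t < ?n" using posw_lt[OF assms(2)] t assms(3) by simp
  have "Psi w ! posw w t = Psi w ! posw w' t" using e1 e2 assms(4) by simp
  hence "posw w t = posw w' t"
    using nth_eq_iff_index_eq[OF d] l1 l2 by (simp add: Psi_def)
  thus "w!t = w'!t" unfolding posw_def by (cases "w!t"; cases "w'!t") presburger+
qed

lemma card_odd_lt: "card {j. j < m \<and> odd j} = m div 2"
proof (induction m)
  case (Suc m)
  show ?case
  proof (cases "odd m")
    case True
    have "{j. j < Suc m \<and> odd j} = insert m {j. j < m \<and> odd j}" using True by (auto simp: less_Suc_eq)
    thus ?thesis using Suc True by (simp; presburger)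
  next
    case False
    have "{j. j < Suc m \<and> odd j} = {j. j < m \<and> odd j}" using False by (auto simp: less_Suc_eq)
    thus ?thesis using Suc False by (simp; presburger)
  qed
qed simp

lemma card_even_lt: "card {j. j < m \<and> even j} = (m+1) div 2"
proof (induction m)
  case (Suc m)
  show ?case
  proof (cases "even m")
    case True
    have "{j. j < Suc m \<and> even j} = insert m {j. j < m \<and> even j}" using True by (auto simp: less_Suc_eq)
    thus ?thesis using Suc True by (simp; presburger)
  next
    case False
    have "{j. j < Suc m \<and> even j} = {j. j < m \<and> even j}" using False by (auto simp: less_Suc_eq)
    thus ?thesis using Suc False by (simp; presburger)
  qed
qed simp

lemma card_par_lt: "card {j. j < i \<and> odd j = odd i} = i div 2"
proof (cases "odd i")
  case True thus ?thesis using card_odd_lt[of i] by simp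
next
  case False thus ?thesis using card_even_lt[of i] by (simp; presburger)
qed

lemma incr2:
  fixes p :: "nat list"
  assumes H: "\<forall>i. i+2 < n \<longrightarrow> p!i < p!(i+2)"
  shows "j + 2*(Suc d) < n \<Longrightarrow> p!j < p!(j + 2*(Suc d))"
proof (induction d)
  case 0 thus ?case using H by simp
next
  case (Suc d)
  have eq: "j + 2*Suc (Suc d) = j + 2*Suc d + 2" by simp
  have l: "j + 2*Suc d + 2 < n" using Suc.prems eq by simp
  hence a: "p!j < p!(j + 2*Suc d)" using Suc.IH by simp
  have b: "p!(j + 2*Suc d) < p!(j + 2*Suc d + 2)" using H l by blast
  show ?case unfolding eq using a b by linarith
qed

lemma incr2':
  fixes p :: "nat list"
  assumes H: "\<forall>i. i+2 < n \<longrightarrow> p!i < p!(i+2)" and "j < i" "i < n" "odd j = odd i"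
  shows "p!j < p!i"
proof -
  obtain d where "i = j + 2*(Suc d)"
  proof -
    have "even (i - j)" using assms(2,4) by (simp add: even_diff_nat)
    then obtain e where e: "i - j = 2*e" by blast
    with assms(2) have "e > 0" by simp
    then obtain d where "e = Suc d" using gr0_implies_Suc by blast
    with e assms(2) have "i = j + 2*Suc d" by simp
    thus ?thesis by (rule that)
  qed
  thus ?thesis using incr2[OF H] assms(3) by simp
qed

lemma Av_surj:
  assumes p: "p \<in> Av n PI"
  shows "\<exists>w. length w = n \<and> bal w \<and> p = Psi w"
proof -
  have pp: "p \<in> perms n" and ok: "\<forall>i. i+2 < n \<longrightarrow> ok3 (p!i) (p!(i+1)) (p!(i+2))"
    using p Av_iff by auto
  have len: "length p = n" using perms_len[OF pp] .
  have dist: "distinct p" and setp: "set p = {1..n}" using pp by (auto simp: perms_def)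
  have H: "\<forall>i. i+2 < n \<longrightarrow> p!i < p!(i+2)" using ok by (auto simp: ok3_def)
  have bn: "bij_betw (nth p) {..<n} {1..n}"
    using bij_betw_nth[OF dist] len setp by auto
  define g where "g t = inv_into {..<n} (nth p) (Suc t)" for t
  have g1: "t < n \<Longrightarrow> g t < n \<and> p ! g t = Suc t" for t
  proof -
    assume "t < n"
    hence "Suc t \<in> (nth p) ` {..<n}" using bn by (auto simp: bij_betw_def)
    thus ?thesis unfolding g_def by (meson f_inv_into_f inv_into_into lessThan_iff)
  qed
  have g2: "j < n \<Longrightarrow> g (p!j - 1) = j \<and> p!j - 1 < n" for j
  proof -
    assume j: "j < n"
    have "p!j \<in> {1..n}" using j len setp nth_mem by blast
    hence "Suc (p!j - 1) = p!j" "p!j - 1 < n" by auto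
    thus ?thesis unfolding g_def using bn j
      by (metis bij_betw_def inv_into_f_f lessThan_iff)
  qed
  have ginj: "inj_on g {..<n}"
    by (rule inj_onI) (metis g1 lessThan_iff nat.inject)
  have gbij: "bij_betw g {..<n} {..<n}"
    by (rule bij_betw_imageI[OF ginj], rule endo_inj_surj) (auto simp: g1 ginj)
  define w where "w = map (\<lambda>t. odd (g t)) [0..<n]"
  have lw: "length w = n" by (simp add: w_def)
  have cntw: "cnt w t c = card {s. s < t \<and> s < n \<and> odd (g s) = c}" for t c
  proof -
    have e: "{s. s < t \<and> s < n \<and> w!s = c} = {s. s < t \<and> s < n \<and> odd (g s) = c}"
      unfolding w_def by (intro Collect_cong) auto
    show ?thesis using e by (simp add: cnt_card lw)
  qed
  have key: "t < n \<Longrightarrow> cnt w t (odd (g t)) = g t div 2" for t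
  proof -
    assume t: "t < n"
    let ?i = "g t"
    have i: "?i < n" "p!?i = Suc t" using g1 t by auto
    have h1: "g ` {s. s < t \<and> s < n \<and> odd (g s) = odd ?i} = {j. j < n \<and> odd j = odd ?i \<and> p!j < p!?i}"
    proof
      show "g ` {s. s < t \<and> s < n \<and> odd (g s) = odd ?i} \<subseteq> {j. j < n \<and> odd j = odd ?i \<and> p!j < p!?i}"
      proof
        fix j assume "j \<in> g ` {s. s < t \<and> s < n \<and> odd (g s) = odd ?i}"
        then obtain s where s: "s < t" "s < n" "odd (g s) = odd ?i" "j = g s" by blast
        have "g s < n" "p ! g s = Suc s" using g1[OF s(2)] by auto
        thus "j \<in> {j. j < n \<and> odd j = odd ?i \<and> p!j < p!?i}" using s i by simp
      qed
    next
      show "{j. j < n \<and> odd j = odd ?i \<and> p!j < p!?i} \<subseteq> g ` {s. s < t \<and> s < n \<and> odd (g s) = odd ?i}"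
      proof
        fix j assume j: "j \<in> {j. j < n \<and> odd j = odd ?i \<and> p!j < p!?i}"
        have "g (p!j - 1) = j" "p!j - 1 < n" using g2 j by auto
        moreover have "p!j \<ge> 1" using j len setp nth_mem by fastforce
        moreover have "p!j - 1 < t" using j i calculation by auto
        ultimately show "j \<in> g ` {s. s < t \<and> s < n \<and> odd (g s) = odd ?i}"
          using j by (auto intro!: image_eqI[where x="p!j - 1"])
      qed
    qed
    have h2: "{j. j < n \<and> odd j = odd ?i \<and> p!j < p!?i} = {j. j < ?i \<and> odd j = odd ?i}"
    proof
      show "{j. j < n \<and> odd j = odd ?i \<and> p!j < p!?i} \<subseteq> {j. j < ?i \<and> odd j = odd ?i}"
      proof
        fix j assume j: "j \<in> {j. j < n \<and> odd j = odd ?i \<and> p!j < p!?i}"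
        have "\<not> ?i < j" using incr2'[OF H, of ?i j] j by auto
        moreover have "j \<noteq> ?i" using j by auto
        ultimately show "j \<in> {j. j < ?i \<and> odd j = odd ?i}" using j by auto
      qed
    next
      show "{j. j < ?i \<and> odd j = odd ?i} \<subseteq> {j. j < n \<and> odd j = odd ?i \<and> p!j < p!?i}"
      proof
        fix j assume j: "j \<in> {j. j < ?i \<and> odd j = odd ?i}"
        have "p!j < p!?i" using incr2'[OF H, of j ?i] i j by auto
        thus "j \<in> {j. j < n \<and> odd j = odd ?i \<and> p!j < p!?i}" using i j by auto
      qed
    qed
    have h3: "inj_on g {s. s < t \<and> s < n \<and> odd (g s) = odd ?i}"
      using ginj by (rule inj_on_subset) auto
    have "card {s. s < t \<and> s < n \<and> odd (g s) = odd ?i} = card {j. j < ?i \<and> odd j = odd ?i}"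
      using card_image[OF h3] h1 h2 by simp
    thus ?thesis using cntw card_par_lt by simp
  qed
  have pw: "t < n \<Longrightarrow> posw w t = g t" for t
  proof -
    assume t: "t < n"
    have wt: "w!t = odd (g t)" using t by (simp add: w_def)
    show ?thesis
    proof (cases "odd (g t)")
      case True
      hence "posw w t = 2 * (g t div 2) + 1" using key[OF t] wt by (simp add: posw_def)
      thus ?thesis using True by presburger
    next
      case False
      hence "posw w t = 2 * (g t div 2)" using key[OF t] wt by (simp add: posw_def)
      thus ?thesis using False by presburger
    qed
  qed
  have cT: "count_list w True = n div 2"
  proof -
    have "count_list w True = card {s. s < n \<and> odd (g s)}"
      using cntw[of n True] cnt_full[of w True] lw by simp
    also have "\<dots> = card (g ` {s. s < n \<and> odd (g s)})"
    proof -
      have "inj_on g {s. s < n \<and> odd (g s)}" using ginj by (rule inj_on_subset) auto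
      thus ?thesis by (simp add: card_image)
    qed
    also have "g ` {s. s < n \<and> odd (g s)} = {j. j < n \<and> odd j}"
    proof
      show "g ` {s. s < n \<and> odd (g s)} \<subseteq> {j. j < n \<and> odd j}" using g1 by auto
      show "{j. j < n \<and> odd j} \<subseteq> g ` {s. s < n \<and> odd (g s)}"
      proof
        fix j assume j: "j \<in> {j. j < n \<and> odd j}"
        hence "g (p!j - 1) = j" "p!j - 1 < n" using g2 by auto
        thus "j \<in> g ` {s. s < n \<and> odd (g s)}" using j by (auto intro!: image_eqI[where x="p!j - 1"])
      qed
    qed
    finally show ?thesis using card_odd_lt by simp
  qed
  have cF: "count_list w False = (n+1) div 2"
    using count_tf[of w] cT lw by presburger
  have b: "bal w" unfolding bal_def using cT cF by presburger
  have "p = Psi w"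
  proof (rule nth_equalityI)
    show "length p = length (Psi w)" using len lw by (simp add: Psi_def)
    fix i assume "i < length p"
    hence i: "i < n" using len by simp
    have bw: "bij_betw (posw w) {..<n} {..<n}" using posw_bij[OF b] lw by simp
    define t where "t = inv_into {..<n} (posw w) i"
    have "t < n" "posw w t = i" using mkperm_inv_lt[OF bw i] mkperm_f_inv[OF bw i] t_def by auto
    hence "g t = i" "t < n" using pw by auto
    hence "p!i = Suc t" using g1 by auto
    thus "p!i = Psi w ! i" using i lw by (simp add: Psi_def mkperm_nth t_def)
  qed
  thus ?thesis using lw b by blast
qed



definition winv :: "bool list \<Rightarrow> nat" where
  "winv w = card {(s,t). s < t \<and> t < length w \<and> posw w t < posw w s}"

lemma inv_Psi: "bal w \<Longrightarrow> Defs.inv (Psi w) = winv w"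
  unfolding Psi_def winv_def using mkperm_inv[OF posw_bij] by simp

lemma cnt_snoc: "s \<le> length w \<Longrightarrow> cnt (w@[c]) s d = cnt w s d"
  by (simp add: cnt_def)

lemma posw_snoc: "s < length w \<Longrightarrow> posw (w@[c]) s = posw w s"
  by (simp add: posw_def cnt_snoc nth_append)

lemma posw_snoc_last: "posw (w@[c]) (length w) = (if c then 2 * count_list w True + 1 else 2 * count_list w False)"
  by (simp add: posw_def cnt_snoc)

lemma winv_snoc: "winv (w@[c]) = winv w + card {s. s < length w \<and> posw (w@[c]) (length w) < posw w s}"
proof -
  let ?P = "posw (w@[c]) (length w)"
  let ?S = "{(s,t). s < t \<and> t < length w \<and> posw w t < posw w s}"
  let ?N = "{s. s < length w \<and> ?P < posw w s}"
  have "{(s,t). s < t \<and> t < length (w@[c]) \<and> posw (w@[c]) t < posw (w@[c]) s} = ?S \<union> (\<lambda>s. (s, length w)) ` ?N"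
  proof
    show "{(s,t). s < t \<and> t < length (w@[c]) \<and> posw (w@[c]) t < posw (w@[c]) s} \<subseteq> ?S \<union> (\<lambda>s. (s, length w)) ` ?N"
    proof
      fix x assume "x \<in> {(s,t). s < t \<and> t < length (w@[c]) \<and> posw (w@[c]) t < posw (w@[c]) s}"
      then obtain s t where x: "x = (s,t)" "s < t" "t < Suc (length w)" "posw (w@[c]) t < posw (w@[c]) s" by auto
      show "x \<in> ?S \<union> (\<lambda>s. (s, length w)) ` ?N"
      proof (cases "t = length w")
        case True thus ?thesis using x posw_snoc[of s w c] by auto
      next
        case False thus ?thesis using x posw_snoc[of s w c] posw_snoc[of t w c] by auto
      qed
    qed
  next
    show "?S \<union> (\<lambda>s. (s, length w)) ` ?N \<subseteq> {(s,t). s < t \<and> t < length (w@[c]) \<and> posw (w@[c]) t < posw (w@[c]) s}"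
      using posw_snoc by auto
  qed
  moreover have "finite ?S" by (rule finite_subset[of _ "{..<length w} \<times> {..<length w}"]) auto
  moreover have "finite ?N" by auto
  moreover have "?S \<inter> (\<lambda>s. (s, length w)) ` ?N = {}" by auto
  moreover have "card ((\<lambda>s. (s, length w)) ` ?N) = card ?N" by (rule card_image) (auto simp: inj_on_def)
  ultimately show ?thesis unfolding winv_def by (simp add: card_Un_disjoint)
qed

lemma cnt_ge: "card {s. s < length w \<and> w!s = c \<and> m \<le> cnt w s c} = count_list w c - m"
proof (induction w rule: rev_induct)
  case Nil thus ?case by simp
next
  case (snoc d w)
  let ?A = "{s. s < length w \<and> w!s = c \<and> m \<le> cnt w s c}"
  let ?B = "{s. s = length w \<and> d = c \<and> m \<le> count_list w c}"
  have e: "{s. s < length (w@[d]) \<and> (w@[d])!s = c \<and> m \<le> cnt (w@[d]) s c} = ?A \<union> ?B"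
  proof (rule set_eqI)
    fix s
    show "s \<in> {s. s < length (w@[d]) \<and> (w@[d])!s = c \<and> m \<le> cnt (w@[d]) s c} \<longleftrightarrow> s \<in> ?A \<union> ?B"
    proof (cases "s < length w")
      case True thus ?thesis by (simp add: nth_append cnt_snoc)
    next
      case False
      show ?thesis
      proof (cases "s = length w")
        case True thus ?thesis by (simp add: cnt_snoc)
      next
        case False thus ?thesis using \<open>\<not> s < length w\<close> by simp
      qed
    qed
  qed
  have fA: "finite ?A" by simp
  have fB: "finite ?B" by simp
  have dis: "?A \<inter> ?B = {}" by auto
  have cB: "card ?B = (if d = c \<and> m \<le> count_list w c then 1 else 0)"
  proof (cases "d = c \<and> m \<le> count_list w c")
    case True hence "?B = {length w}" by auto
    thus ?thesis using True by simp
  next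
    case False hence "?B = {}" by auto
    thus ?thesis using False by simp
  qed
  have "card (?A \<union> ?B) = card ?A + card ?B" using fA fB dis by (rule card_Un_disjoint)
  thus ?case unfolding e using snoc.IH cB by auto
qed

lemma winv_snoc_F: "winv (w@[False]) = winv w + (count_list w True - count_list w False)"
proof -
  have "{s. s < length w \<and> posw (w@[False]) (length w) < posw w s} = {s. s < length w \<and> w!s = True \<and> count_list w False \<le> cnt w s True}"
  proof -
    have P: "posw (w@[False]) (length w) = 2 * count_list w False" by (simp add: posw_snoc_last)
    show ?thesis unfolding P
    proof (rule Collect_cong)
      fix s
      show "(s < length w \<and> 2 * count_list w False < posw w s) \<longleftrightarrow> (s < length w \<and> w!s = True \<and> count_list w False \<le> cnt w s True)"
      proof (cases "s < length w \<and> w!s")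
        case True thus ?thesis by (auto simp: posw_def)
      next
        case False
        thus ?thesis using cnt_lt_total[of s w False] by (auto simp: posw_def)
      qed
    qed
  qed
  thus ?thesis using winv_snoc[of w False] cnt_ge[of w True] by simp
qed

lemma winv_snoc_T: "winv (w@[True]) = winv w + (count_list w False - (count_list w True + 1))"
proof -
  have "{s. s < length w \<and> posw (w@[True]) (length w) < posw w s} = {s. s < length w \<and> w!s = False \<and> count_list w True + 1 \<le> cnt w s False}"
  proof -
    have P: "posw (w@[True]) (length w) = 2 * count_list w True + 1" by (simp add: posw_snoc_last)
    show ?thesis unfolding P
    proof (rule Collect_cong)
      fix s
      show "(s < length w \<and> 2 * count_list w True + 1 < posw w s) \<longleftrightarrow> (s < length w \<and> w!s = False \<and> count_list w True + 1 \<le> cnt w s False)"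
      proof (cases "s < length w \<and> \<not> w!s")
        case True thus ?thesis by (auto simp: posw_def)
      next
        case False
        thus ?thesis using cnt_lt_total[of s w True] by (auto simp: posw_def)
      qed
    qed
  qed
  thus ?thesis using winv_snoc[of w True] cnt_ge[of w False] by simp
qed

lemma winv_Nil: "winv [] = 0" by (simp add: winv_def)

lemma endpt_take: "endpt (take m P) = (cnt P m False, cnt P m True)"
  by (simp add: endpt_def cnt_def)

lemma area_alt: "area P = card {(i, j). j \<ge> i + 1 \<and> (\<exists>m<length P. P ! m = False \<and> cnt P m False = i \<and> j < cnt P m True)}"
  unfolding area_def endpt_take by simp

lemma area_Nil: "area [] = 0" by (simp add: area_alt)

lemma area_snoc: "area (P@[c]) = area P + (if c then 0 else count_list P True - (count_list P False + 1))"
proof -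
  let ?S = "\<lambda>P. {(i, j). j \<ge> i + 1 \<and> (\<exists>m<length P. P ! m = False \<and> cnt P m False = i \<and> j < cnt P m True)}"
  let ?a = "count_list P False" and ?b = "count_list P True"
  let ?N = "(if c then {} else Pair ?a ` {?a+1..<?b})"
  have eq: "?S (P@[c]) = ?S P \<union> ?N"
  proof
    show "?S (P@[c]) \<subseteq> ?S P \<union> ?N"
    proof
      fix x assume "x \<in> ?S (P@[c])"
      then obtain i j m where x: "x = (i,j)" "j \<ge> i+1" "m < Suc (length P)" "(P@[c])!m = False"
          "cnt (P@[c]) m False = i" "j < cnt (P@[c]) m True" by auto
      show "x \<in> ?S P \<union> ?N"
      proof (cases "m = length P")
        case True thus ?thesis using x by (auto simp: cnt_snoc)
      next
        case False
        hence "m < length P" using x by simp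
        thus ?thesis using x by (auto simp: cnt_snoc nth_append)
      qed
    qed
  next
    show "?S P \<union> ?N \<subseteq> ?S (P@[c])"
    proof
      fix x assume "x \<in> ?S P \<union> ?N"
      thus "x \<in> ?S (P@[c])"
      proof
        assume "x \<in> ?S P"
        then obtain i j m where x: "x = (i,j)" "j \<ge> i+1" "m < length P" "P!m = False"
          "cnt P m False = i" "j < cnt P m True" by auto
        thus ?thesis by (auto simp: cnt_snoc nth_append intro!: exI[where x=m])
      next
        assume "x \<in> ?N"
        then obtain j where "\<not> c" "x = (?a, j)" "?a + 1 \<le> j" "j < ?b" by (auto split: if_splits)
        thus ?thesis by (auto simp: cnt_snoc intro!: exI[where x="length P"])
      qed
    qed
  qed
  have fin: "finite (?S P)"
  proof (rule finite_subset)
    show "?S P \<subseteq> {..length P} \<times> {..length P}"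
    proof
      fix x assume "x \<in> ?S P"
      then obtain i j m where x: "x = (i,j)" "cnt P m False = i" "j < cnt P m True" by auto
      have "cnt P m False \<le> count_list P False" "cnt P m True \<le> count_list P True"
        by (rule cnt_le_total)+
      moreover have "count_list P False \<le> length P" "count_list P True \<le> length P"
        by (rule count_le_length)+
      ultimately have "cnt P m False \<le> length P" "cnt P m True \<le> length P" by linarith+
      thus "x \<in> {..length P} \<times> {..length P}" using x by auto
    qed
  qed auto
  have dis: "?S P \<inter> ?N = {}"
  proof (rule ccontr)
    assume "?S P \<inter> ?N \<noteq> {}"
    then obtain x where x1: "x \<in> ?S P" and x2: "x \<in> ?N" by blast
    from x1 obtain i j m where x: "x = (i,j)" "m < length P" "P!m = False" "cnt P m False = i" by auto
    from x2 have "fst x = ?a" by (auto split: if_splits)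
    moreover have "cnt P m False < ?a" using cnt_lt_total[of m P False] x by simp
    ultimately show False using x by simp
  qed
  have cN: "card ?N = (if c then 0 else ?b - (?a + 1))"
  proof -
    have "inj_on (Pair ?a) {?a+1..<?b}" by (simp add: inj_on_def)
    hence "card (Pair ?a ` {?a+1..<?b}) = ?b - (?a + 1)" by (simp add: card_image)
    thus ?thesis by simp
  qed
  show ?thesis unfolding area_alt eq using fin dis cN by (simp add: card_Un_disjoint)
qed



definition ballot :: "bool list \<Rightarrow> bool" where
  "ballot P \<longleftrightarrow> (\<forall>m \<le> length P. cnt P m False \<le> cnt P m True)"

lemma ballot_snoc: "ballot (P@[c]) \<Longrightarrow> ballot P \<and> count_list (P@[c]) False \<le> count_list (P@[c]) True"
proof -
  assume b: "ballot (P@[c])"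
  have "ballot P" unfolding ballot_def
  proof (intro allI impI)
    fix m assume "m \<le> length P"
    thus "cnt P m False \<le> cnt P m True" using b[unfolded ballot_def, rule_format, of m] by (simp add: cnt_snoc)
  qed
  moreover have "cnt (P@[c]) (length (P@[c])) False \<le> cnt (P@[c]) (length (P@[c])) True"
    using b unfolding ballot_def by blast
  hence "count_list (P@[c]) False \<le> count_list (P@[c]) True" by (simp only: cnt_full)
  ultimately show ?thesis by simp
qed

lemma ballot_total: "ballot P \<Longrightarrow> count_list P False \<le> count_list P True"
proof -
  assume "ballot P"
  hence "cnt P (length P) False \<le> cnt P (length P) True" unfolding ballot_def by blast
  thus ?thesis by (simp only: cnt_full)
qed

lemma winv_ballot: "ballot P \<Longrightarrow> winv P = area P + count_list P False"
proof (induction P rule: rev_induct)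
  case Nil thus ?case by (simp add: winv_Nil area_Nil)
next
  case (snoc c P)
  have bP: "ballot P" and le: "count_list (P@[c]) False \<le> count_list (P@[c]) True"
    using ballot_snoc[OF snoc.prems] by auto
  show ?case
  proof (cases c)
    case True
    have "count_list P False \<le> count_list P True" using ballot_total[OF bP] .
    thus ?thesis using snoc.IH[OF bP] True by (simp add: winv_snoc_T area_snoc)
  next
    case False
    have "count_list P False + 1 \<le> count_list P True" using le False by simp
    thus ?thesis using snoc.IH[OF bP] False by (simp add: winv_snoc_F area_snoc)
  qed
qed

lemma count_map_Not: "count_list (map Not v) c = count_list v (\<not> c)"
  by (induction v) auto

lemma winv_neg: "ballot P \<Longrightarrow> winv (False # map Not P) = area P + count_list P False"
proof (induction P rule: rev_induct)
  case Nil thus ?case using winv_snoc_F[of "[]"] by (simp add: area_Nil winv_Nil)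
next
  case (snoc c P)
  have bP: "ballot P" and le: "count_list (P@[c]) False \<le> count_list (P@[c]) True"
    using ballot_snoc[OF snoc.prems] by auto
  have e: "False # map Not (P@[c]) = (False # map Not P) @ [\<not> c]" by simp
  show ?case
  proof (cases c)
    case True
    have "count_list P False \<le> count_list P True" using ballot_total[OF bP] .
    hence h: "winv ((False # map Not P) @ [False]) = winv (False # map Not P)"
      using winv_snoc_F[of "False # map Not P"] by (simp add: count_map_Not)
    have "area (P@[c]) = area P" using True by (simp add: area_snoc)
    thus ?thesis unfolding e using snoc.IH[OF bP] True h by simp
  next
    case False
    have "count_list P False + 1 \<le> count_list P True" using le False by simp
    hence h: "winv ((False # map Not P) @ [True]) = winv (False # map Not P) + (count_list P True - count_list P False)"
      using winv_snoc_T[of "False # map Not P"] by (simp add: count_map_Not)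
    have "area (P@[c]) = area P + (count_list P True - (count_list P False + 1))" using False by (simp add: area_snoc)
    thus ?thesis unfolding e using snoc.IH[OF bP] False h \<open>count_list P False + 1 \<le> count_list P True\<close> by simp
  qed
qed

lemma dyck_iff: "dyck k P \<longleftrightarrow> length P = 2*k \<and> count_list P False = k \<and> count_list P True = k \<and> ballot P"
proof -
  have "\<And>m. fst (endpt (take m P)) = cnt P m False" "\<And>m. snd (endpt (take m P)) = cnt P m True"
    by (simp_all add: endpt_take)
  thus ?thesis unfolding dyck_def ballot_def by (auto simp: endpt_def)
qed

definition WW :: "nat \<Rightarrow> bool list set" where
  "WW n = {w. length w = n \<and> bal w \<and> WC w}"

lemma I_poly_WW: "I_poly n PI q = (\<Sum>w\<in>WW n. q ^ winv w)"
proof -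
  have img: "Av n PI = Psi ` WW n"
  proof
    show "Av n PI \<subseteq> Psi ` WW n"
    proof
      fix p assume p: "p \<in> Av n PI"
      then obtain w where w: "length w = n" "bal w" "p = Psi w" using Av_surj by blast
      hence "WC w" using Psi_Av_iff[OF w(2)] p by simp
      thus "p \<in> Psi ` WW n" using w by (auto simp: WW_def)
    qed
  next
    show "Psi ` WW n \<subseteq> Av n PI"
      using Psi_Av_iff by (auto simp: WW_def)
  qed
  have inj: "inj_on Psi (WW n)"
    by (rule inj_onI) (auto simp: WW_def intro: Psi_inj)
  have "I_poly n PI q = (\<Sum>p\<in>Psi ` WW n. q ^ Defs.inv p)" unfolding I_poly_def img ..
  also have "\<dots> = (\<Sum>w\<in>WW n. q ^ Defs.inv (Psi w))" by (rule sum.reindex[OF inj, unfolded comp_def])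
  also have "\<dots> = (\<Sum>w\<in>WW n. q ^ winv w)" by (rule sum.cong) (auto simp: WW_def inv_Psi)
  finally show ?thesis .
qed



lemma cnt_Cons_Suc: "cnt (x#v) (Suc m) c = cnt v m c + (if x = c then 1 else 0)"
  by (simp add: cnt_def)

lemma cnt_map_Not: "cnt (map Not v) m c = cnt v m (\<not> c)"
  by (simp add: cnt_def take_map count_map_Not)

lemma okl_snoc: "t < length w \<Longrightarrow> okl (w@[c]) t = okl w t"
  by (simp add: okl_def cnt_snoc nth_append)

lemma ballot_at: "ballot P \<Longrightarrow> m \<le> length P \<Longrightarrow> cnt P m False \<le> cnt P m True"
  unfolding ballot_def by blast

lemma okl_ballot: "ballot P \<Longrightarrow> t < length P \<Longrightarrow> okl P t"
proof -
  assume b: "ballot P" and t: "t < length P"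
  have a0: "cnt P t False \<le> cnt P t True" using ballot_at[OF b] t by simp
  have a1: "cnt P (Suc t) False \<le> cnt P (Suc t) True" using ballot_at[OF b] t by simp
  show ?thesis
  proof (cases "P!t")
    case True thus ?thesis using a0 by (simp add: okl_def)
  next
    case False thus ?thesis using a1 t by (simp add: okl_def cnt_Suc)
  qed
qed

lemma okl_neg: "ballot P \<Longrightarrow> t < length P \<Longrightarrow> okl (False # map Not P) (Suc t)"
proof -
  assume b: "ballot P" and t: "t < length P"
  have a0: "cnt P t False \<le> cnt P t True" using ballot_at[OF b] t by simp
  have a1: "cnt P (Suc t) False \<le> cnt P (Suc t) True" using ballot_at[OF b] t by simp
  show ?thesis
  proof (cases "P!t")
    case True thus ?thesis using a0 t by (simp add: okl_def cnt_Cons_Suc cnt_map_Not)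
  next
    case False
    have a1': "cnt P t False + 1 \<le> cnt P t True" using a1 False t by (simp add: cnt_Suc)
    thus ?thesis using False t by (simp add: okl_def cnt_Cons_Suc cnt_map_Not)
  qed
qed

lemma dyck_props: "dyck k P \<Longrightarrow> length P = 2*k \<and> count_list P False = k \<and> count_list P True = k \<and> ballot P"
  using dyck_iff by blast

lemma WW_E1: "dyck k P \<Longrightarrow> P \<in> WW (2*k)"
  using dyck_props[of k P] okl_ballot[of P] by (auto simp: WW_def bal_def WC_def)

lemma WW_O1: "dyck k P \<Longrightarrow> P @ [False] \<in> WW (2*k+1)"
proof -
  assume d: "dyck k P"
  note p = dyck_props[OF d]
  have "WC (P @ [False])" unfolding WC_def
  proof (intro allI impI)
    fix t assume t: "t < length (P@[False])" and "0 < posw (P@[False]) t" and l: "posw (P@[False]) t + 1 < length (P@[False])"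
    show "okl (P@[False]) t"
    proof (cases "t < length P")
      case True thus ?thesis using okl_snoc okl_ballot p by auto
    next
      case False
      hence "t = length P" using t by simp
      moreover have "posw (P@[False]) (length P) = 2 * count_list P False" by (simp add: posw_snoc_last)
      ultimately have "posw (P@[False]) t = 2*k" using p by simp
      thus ?thesis using l p by simp
    qed
  qed
  thus ?thesis using p by (auto simp: WW_def bal_def)
qed

lemma WW_O2: "dyck k P \<Longrightarrow> False # map Not P \<in> WW (2*k+1)"
proof -
  assume d: "dyck k P"
  note p = dyck_props[OF d]
  have "WC (False # map Not P)" unfolding WC_def
  proof (intro allI impI)
    fix t assume t: "t < length (False # map Not P)" and pos: "0 < posw (False # map Not P) t"
    show "okl (False # map Not P) t"
    proof (cases t)
      case 0 thus ?thesis using pos by (simp add: posw_def)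
    next
      case (Suc t') thus ?thesis using okl_neg[of P t'] p t by simp
    qed
  qed
  thus ?thesis using p by (auto simp: WW_def bal_def count_map_Not)
qed

lemma WW_E2: "k \<ge> 1 \<Longrightarrow> dyck (k-1) P \<Longrightarrow> (False # map Not P) @ [True] \<in> WW (2*k)"
proof -
  assume k: "k \<ge> 1" and d: "dyck (k-1) P"
  note p = dyck_props[OF d]
  let ?u = "False # map Not P"
  have "WC (?u @ [True])" unfolding WC_def
  proof (intro allI impI)
    fix t assume t: "t < length (?u@[True])" and pos: "0 < posw (?u@[True]) t" and l: "posw (?u@[True]) t + 1 < length (?u@[True])"
    show "okl (?u@[True]) t"
    proof (cases "t < length ?u")
      case True
      hence e: "okl (?u@[True]) t = okl ?u t" by (rule okl_snoc)
      show ?thesis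
      proof (cases t)
        case 0 thus ?thesis using pos True by (simp add: posw_def nth_append)
      next
        case (Suc t') thus ?thesis using okl_neg[of P t'] p True e by simp
      qed
    next
      case False
      hence "t = length ?u" using t by simp
      moreover have "posw (?u@[True]) (length ?u) = 2 * count_list ?u True + 1" by (simp only: posw_snoc_last if_True)
      ultimately have "posw (?u@[True]) t = 2*(k-1) + 1" using p by (simp add: count_map_Not)
      thus ?thesis using l p k by simp
    qed
  qed
  thus ?thesis using p k by (auto simp: WW_def bal_def count_map_Not)
qed

lemma WW_facts: "w \<in> WW n \<Longrightarrow> length w = n \<and> bal w \<and> (\<forall>t<n. 0 < posw w t \<longrightarrow> posw w t + 1 < n \<longrightarrow> okl w t)"
  by (auto simp: WW_def WC_def)

lemma C1:
  assumes w: "w \<in> WW n" and w0: "w!0"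
  shows "m \<le> n \<Longrightarrow> even n \<or> m < n \<Longrightarrow> cnt w m False \<le> cnt w m True"
proof (induction m)
  case 0 thus ?case by simp
next
  case (Suc m)
  note f = WW_facts[OF w]
  have IH: "cnt w m False \<le> cnt w m True" using Suc by simp
  have mn: "m < length w" using Suc.prems f by simp
  show ?case
  proof (cases "w!m")
    case True thus ?thesis using IH mn by (simp add: cnt_Suc)
  next
    case False
    have "cnt w m False < cnt w m True"
    proof (rule ccontr)
      assume "\<not> cnt w m False < cnt w m True"
      hence eq: "cnt w m False = cnt w m True" using IH by simp
      have sm: "cnt w m True + cnt w m False = m" using cnt_sum[of w m] mn by simp
      have m0: "m \<noteq> 0" using w0 False by (cases m) auto
      have ps: "posw w m = 2 * cnt w m False" using False by (simp add: posw_def)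
      have "0 < posw w m" using ps eq sm m0 by simp
      moreover have "posw w m + 1 < n" using ps eq sm Suc.prems by presburger
      ultimately have "okl w m" using f mn by auto
      thus False using eq False by (simp add: okl_def)
    qed
    thus ?thesis using False mn by (simp add: cnt_Suc)
  qed
qed

lemma C2:
  assumes w: "w \<in> WW n" and w0: "\<not> w!0"
  shows "1 \<le> m \<Longrightarrow> m \<le> n \<Longrightarrow> odd n \<or> m < n \<Longrightarrow> cnt w m True + 1 \<le> cnt w m False"
proof (induction m)
  case 0 thus ?case by simp
next
  case (Suc m)
  note f = WW_facts[OF w]
  have mn: "m < length w" using Suc.prems f by simp
  show ?case
  proof (cases "m = 0")
    case True thus ?thesis using w0 mn by (simp add: cnt_Suc)
  next
    case m0: False
    have IH: "cnt w m True + 1 \<le> cnt w m False" using Suc m0 by simp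
    show ?thesis
    proof (cases "w!m")
      case False thus ?thesis using IH mn by (simp add: cnt_Suc)
    next
      case True
      have "cnt w m True + 1 < cnt w m False"
      proof (rule ccontr)
        assume "\<not> cnt w m True + 1 < cnt w m False"
        hence eq: "cnt w m False = cnt w m True + 1" using IH by simp
        have sm: "cnt w m True + cnt w m False = m" using cnt_sum[of w m] mn by simp
        have ps: "posw w m = 2 * cnt w m True + 1" using True by (simp add: posw_def)
        have "posw w m + 1 < n" using ps eq sm Suc.prems by presburger
        hence "okl w m" using f mn ps by auto
        thus False using eq True by (simp add: okl_def)
      qed
      thus ?thesis using True mn by (simp add: cnt_Suc)
    qed
  qed
qed



lemma WW_counts_even: "w \<in> WW (2*k) \<Longrightarrow> count_list w False = k \<and> count_list w True = k"
  using WW_facts[of w "2*k"] count_tf[of w] by (auto simp: bal_def)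

lemma WW_counts_odd: "w \<in> WW (2*k+1) \<Longrightarrow> count_list w False = k+1 \<and> count_list w True = k"
  using WW_facts[of w "2*k+1"] count_tf[of w] by (auto simp: bal_def)

lemma cnt_Cons_Suc': "cnt (x#v) (Suc m) c = cnt v m c + (if x = c then 1 else 0)"
  by (rule cnt_Cons_Suc)

lemma WW_even_sub:
  assumes k: "k \<ge> 1" and w: "w \<in> WW (2*k)"
  shows "dyck k w \<or> (\<exists>P. dyck (k-1) P \<and> w = (False # map Not P) @ [True])"
proof -
  note f = WW_facts[OF w]
  note c = WW_counts_even[OF w]
  have ne: "w \<noteq> []" using f k by auto
  show ?thesis
  proof (cases "w!0")
    case True
    have "ballot w" unfolding ballot_def using C1[OF w True] f by auto
    hence "dyck k w" using f c by (simp add: dyck_iff)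
    thus ?thesis by simp
  next
    case False
    obtain v where wv: "w = False # v" using ne False by (cases w) auto
    have "v \<noteq> []" using f k wv by auto
    then obtain v' x where vx: "v = v' @ [x]" by (cases v rule: rev_exhaust) auto
    have "length w = 2*k" using f by blast
    hence lv': "length v' = 2*k - 2" using wv vx by auto
    have C2': "\<And>m. 1 \<le> m \<Longrightarrow> m < 2*k \<Longrightarrow> cnt w m True + 1 \<le> cnt w m False"
      using C2[OF w False] by simp
    have cw: "\<And>m c. m \<le> length v' \<Longrightarrow> cnt w (Suc m) c = cnt v' m c + (if c then 0 else 1)"
      unfolding wv vx by (simp add: cnt_Cons_Suc cnt_snoc)
    have cv: "count_list w True = count_list v' True + (if x then 1 else 0)"
             "count_list w False = count_list v' False + 1 + (if x then 0 else 1)"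
      unfolding wv vx by auto
    have "cnt w (Suc (length v')) True + 1 \<le> cnt w (Suc (length v')) False"
      using C2'[of "Suc (length v')"] lv' k by simp
    hence x: "x" using cw[of "length v'"] cv c by (cases x) auto
    define P where "P = map Not v'"
    have v'P: "v' = map Not P" unfolding P_def by (simp add: map_idI)
    have "dyck (k-1) P" unfolding dyck_iff
    proof (intro conjI)
      show "length P = 2*(k-1)" using lv' by (simp add: P_def)
      show "count_list P False = k-1" using cv c x by (simp add: P_def count_map_Not)
      show "count_list P True = k-1" using cv c x by (simp add: P_def count_map_Not)
      show "ballot P" unfolding ballot_def
      proof (intro allI impI)
        fix m assume m: "m \<le> length P"
        have "cnt w (Suc m) True + 1 \<le> cnt w (Suc m) False" using C2'[of "Suc m"] m lv' k by (simp add: P_def)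
        thus "cnt P m False \<le> cnt P m True" using cw[of m] m by (simp add: P_def cnt_map_Not)
      qed
    qed
    moreover have "w = (False # map Not P) @ [True]" using wv vx x v'P by simp
    ultimately show ?thesis by blast
  qed
qed

lemma WW_odd_sub:
  assumes k: "k \<ge> 1" and w: "w \<in> WW (2*k+1)"
  shows "(\<exists>P. dyck k P \<and> w = P @ [False]) \<or> (\<exists>P. dyck k P \<and> w = False # map Not P)"
proof -
  note f = WW_facts[OF w]
  note c = WW_counts_odd[OF w]
  have ne: "w \<noteq> []" using f k by auto
  show ?thesis
  proof (cases "w!0")
    case True
    obtain v' x where vx: "w = v' @ [x]" using ne by (cases w rule: rev_exhaust) auto
    have lv': "length v' = 2*k" using f vx by simp
    have C1': "\<And>m. m \<le> 2*k \<Longrightarrow> cnt w m False \<le> cnt w m True"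
      using C1[OF w True] by simp
    have cw: "\<And>m c. m \<le> length v' \<Longrightarrow> cnt w m c = cnt v' m c"
      unfolding vx by (simp add: cnt_snoc)
    have cv: "count_list w True = count_list v' True + (if x then 1 else 0)"
             "count_list w False = count_list v' False + (if x then 0 else 1)"
      unfolding vx by auto
    have "cnt v' (length v') False \<le> cnt v' (length v') True" using C1'[of "length v'"] cw[of "length v'"] lv' by simp
    hence x: "\<not> x" using cv c by (cases x) auto
    have "dyck k v'" unfolding dyck_iff
    proof (intro conjI)
      show "length v' = 2*k" by fact
      show "count_list v' False = k" using cv c x by simp
      show "count_list v' True = k" using cv c x by simp
      show "ballot v'" unfolding ballot_def using C1' cw lv' by auto
    qed
    thus ?thesis using vx x by blast
  next
    case False
    obtain v where wv: "w = False # v" using ne False by (cases w) auto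
    have lv: "length v = 2*k" using f wv by simp
    have C2': "\<And>m. 1 \<le> m \<Longrightarrow> m \<le> 2*k+1 \<Longrightarrow> cnt w m True + 1 \<le> cnt w m False"
      using C2[OF w False] by simp
    have cw: "\<And>m c. cnt w (Suc m) c = cnt v m c + (if c then 0 else 1)"
      unfolding wv by (simp add: cnt_Cons_Suc)
    have cv: "count_list w True = count_list v True"
             "count_list w False = count_list v False + 1"
      unfolding wv by auto
    define P where "P = map Not v"
    have vP: "v = map Not P" unfolding P_def by (simp add: map_idI)
    have "dyck k P" unfolding dyck_iff
    proof (intro conjI)
      show "length P = 2*k" using lv by (simp add: P_def)
      show "count_list P False = k" using cv c by (simp add: P_def count_map_Not)
      show "count_list P True = k" using cv c by (simp add: P_def count_map_Not)
      show "ballot P" unfolding ballot_def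
      proof (intro allI impI)
        fix m assume m: "m \<le> length P"
        have "cnt w (Suc m) True + 1 \<le> cnt w (Suc m) False" using C2'[of "Suc m"] m lv by (simp add: P_def)
        thus "cnt P m False \<le> cnt P m True" using cw[of m] by (simp add: P_def cnt_map_Not)
      qed
    qed
    thus ?thesis using wv vP by blast
  qed
qed

lemma dyck_hd: "k \<ge> 1 \<Longrightarrow> dyck k P \<Longrightarrow> P \<noteq> [] \<and> P!0"
proof -
  assume k: "k \<ge> 1" and d: "dyck k P"
  note p = dyck_props[OF d]
  have ne: "P \<noteq> []" using p k by auto
  have "cnt P 1 False \<le> cnt P 1 True" using ballot_at[of P 1] p ne k by (simp add: Suc_leI)
  hence "P!0" using ne by (simp add: cnt_Suc split: if_splits)
  thus ?thesis using ne by simp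
qed

lemma finite_dyck: "finite {P. dyck k P}"
proof (rule finite_subset)
  show "{P. dyck k P} \<subseteq> {xs. set xs \<subseteq> (UNIV :: bool set) \<and> length xs = 2*k}"
    by (auto simp: dyck_def)
  show "finite {xs. set xs \<subseteq> (UNIV :: bool set) \<and> length xs = 2*k}"
    by (rule finite_lists_length_eq) simp
qed

lemma sum_shift: "(\<Sum>P\<in>{P. dyck k P}. (q::'a::comm_ring_1) ^ (area P + j)) = q ^ j * Cq k q"
  unfolding Cq_def by (simp add: power_add sum_distrib_left mult.commute)

theorem mainTheorem7:
  fixes q :: "'a::comm_ring_1" and k :: nat
  assumes "k \<ge> 1"
  shows "I_poly (2*k+1) {[3,2,1],[3,1,2],[1,2,3],[2,3,1]} q = 2 * q ^ k * Cq k q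
       \<and> I_poly (2*k) {[3,2,1],[3,1,2],[1,2,3],[2,3,1]} q
           = q ^ (k-1) * Cq (k-1) q + q ^ k * Cq k q"
proof
  let ?D = "\<lambda>k. {P. dyck k P}"
  let ?O1 = "\<lambda>P. P @ [False]"
  let ?O2 = "\<lambda>P. False # map Not P"
  let ?E2 = "\<lambda>P. (False # map Not P) @ [True]"
  have injO1: "inj_on ?O1 A" for A by (auto simp: inj_on_def)
  have injO2: "inj_on ?O2 A" for A by (auto simp: inj_on_def dest: map_inj_on[where f=Not])
  have injE2: "inj_on ?E2 A" for A by (auto simp: inj_on_def dest: map_inj_on[where f=Not])
  have fin: "finite (?D j)" for j by (rule finite_dyck)
  have WWo: "WW (2*k+1) = ?O1 ` ?D k \<union> ?O2 ` ?D k"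
  proof
    show "WW (2*k+1) \<subseteq> ?O1 ` ?D k \<union> ?O2 ` ?D k"
      using WW_odd_sub[OF assms] by blast
    show "?O1 ` ?D k \<union> ?O2 ` ?D k \<subseteq> WW (2*k+1)"
      using WW_O1 WW_O2 by blast
  qed
  have disO: "?O1 ` ?D k \<inter> ?O2 ` ?D k = {}"
  proof (rule ccontr)
    assume "?O1 ` ?D k \<inter> ?O2 ` ?D k \<noteq> {}"
    then obtain P P' where "dyck k P" "dyck k P'" "P @ [False] = False # map Not P'" by blast
    thus False using dyck_hd[OF assms, of P] by (cases P) auto
  qed
  have wO1: "P \<in> ?D k \<Longrightarrow> winv (P @ [False]) = area P + k" for P
    using dyck_props[of k P] winv_snoc_F[of P] winv_ballot[of P] by simp
  have wO2: "P \<in> ?D k \<Longrightarrow> winv (False # map Not P) = area P + k" for P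
    using dyck_props[of k P] winv_neg[of P] by simp
  have "I_poly (2*k+1) PI q = (\<Sum>w\<in>?O1 ` ?D k \<union> ?O2 ` ?D k. q ^ winv w)"
    unfolding I_poly_WW WWo ..
  also have "\<dots> = (\<Sum>w\<in>?O1 ` ?D k. q ^ winv w) + (\<Sum>w\<in>?O2 ` ?D k. q ^ winv w)"
    by (rule sum.union_disjoint) (auto simp: fin disO)
  also have "(\<Sum>w\<in>?O1 ` ?D k. q ^ winv w) = (\<Sum>P\<in>?D k. q ^ (area P + k))"
    by (subst sum.reindex[OF injO1]) (auto intro!: sum.cong simp: wO1)
  also have "(\<Sum>w\<in>?O2 ` ?D k. q ^ winv w) = (\<Sum>P\<in>?D k. q ^ (area P + k))"
    by (subst sum.reindex[OF injO2]) (auto intro!: sum.cong simp: wO2)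
  also have "(\<Sum>P\<in>?D k. q ^ (area P + k)) = q ^ k * Cq k q" by (rule sum_shift)
  finally show "I_poly (2*k+1) PI q = 2 * q ^ k * Cq k q"
    by (simp only: mult_2 distrib_right)
  have WWe: "WW (2*k) = ?D k \<union> ?E2 ` ?D (k-1)"
  proof
    show "WW (2*k) \<subseteq> ?D k \<union> ?E2 ` ?D (k-1)"
      using WW_even_sub[OF assms] by blast
    show "?D k \<union> ?E2 ` ?D (k-1) \<subseteq> WW (2*k)"
      using WW_E1 WW_E2[OF assms] by blast
  qed
  have disE: "?D k \<inter> ?E2 ` ?D (k-1) = {}"
  proof (rule ccontr)
    assume "?D k \<inter> ?E2 ` ?D (k-1) \<noteq> {}"
    then obtain P P' where "dyck k P" "P = (False # map Not P') @ [True]" by blast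
    thus False using dyck_hd[OF assms, of P] by simp
  qed
  have wE1: "P \<in> ?D k \<Longrightarrow> winv P = area P + k" for P
    using dyck_props[of k P] winv_ballot[of P] by simp
  have wE2: "P \<in> ?D (k-1) \<Longrightarrow> winv (False # (map Not P @ [True])) = area P + (k-1)" for P
    using dyck_props[of "k-1" P] winv_neg[of P] winv_snoc_T[of "False # map Not P"] assms
    by (simp add: count_map_Not)
  have "I_poly (2*k) PI q = (\<Sum>w\<in>?D k \<union> ?E2 ` ?D (k-1). q ^ winv w)"
    unfolding I_poly_WW WWe ..
  also have "\<dots> = (\<Sum>w\<in>?D k. q ^ winv w) + (\<Sum>w\<in>?E2 ` ?D (k-1). q ^ winv w)"
    by (rule sum.union_disjoint[OF fin finite_imageI[OF fin] disE])
  also have "(\<Sum>w\<in>?D k. q ^ winv w) = (\<Sum>P\<in>?D k. q ^ (area P + k))"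
    by (rule sum.cong) (auto simp: wE1)
  also have "(\<Sum>w\<in>?E2 ` ?D (k-1). q ^ winv w) = (\<Sum>P\<in>?D (k-1). q ^ (area P + (k-1)))"
    by (subst sum.reindex[OF injE2]) (auto intro!: sum.cong simp: wE2)
  also have "(\<Sum>P\<in>?D k. q ^ (area P + k)) = q ^ k * Cq k q" by (rule sum_shift)
  also have "(\<Sum>P\<in>?D (k-1). q ^ (area P + (k-1))) = q ^ (k-1) * Cq (k-1) q" by (rule sum_shift)
  finally show "I_poly (2*k) PI q = q ^ (k-1) * Cq (k-1) q + q ^ k * Cq k q"
    by (simp only: add.commute)
qed


end
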